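(* Let $G$ be a graph with vertex set $V=\{v_1,\dots,v_n\}$, and let $G^+$ be the graph with vertex set $V\cup\{v_1^+,\dots,v_n^+\}$ (where the $v_i^+$ are new vertices) and edge set $E(G)\cup\{v_iv_i^+: i=1,\dots,n\}$. Then $G$ is a path graph if and only if $G^+$ is a path graph.
   Context: A graph is a path graph if there are a tree $T$, a collection $\mathcal P$ of paths of $T$ and a bijection $\phi$ from the vertex set of the graph onto $\mathcal P$ such that two vertices $u,v$ are adjacent iff the vertex sets of $\phi(u)$ and $\phi(v)$ intersect. *)

theory Defs
  imports Main
begin

definition graph :: "'a set \<Rightarrow> 'a set set \<Rightarrow> bool" where
  "graph V E \<equiv> finite V \<and> (\<forall>e\<in>E. e \<subseteq> V \<and> card e = 2)"

definition is_path :: "'a set \<Rightarrow> 'a set set \<Rightarrow> 'a list \<Rightarrow> bool" where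
  "is_path V E xs \<equiv> xs \<noteq> [] \<and> distinct xs \<and> set xs \<subseteq> V \<and>
     (\<forall>i. Suc i < length xs \<longrightarrow> {xs ! i, xs ! Suc i} \<in> E)"

definition connected_graph :: "'a set \<Rightarrow> 'a set set \<Rightarrow> bool" where
  "connected_graph V E \<equiv> \<forall>x\<in>V. \<forall>y\<in>V. \<exists>xs. is_path V E xs \<and> hd xs = x \<and> last xs = y"

definition is_cycle :: "'a set \<Rightarrow> 'a set set \<Rightarrow> 'a list \<Rightarrow> bool" where
  "is_cycle V E xs \<equiv> 3 \<le> length xs \<and> is_path V E xs \<and> {last xs, hd xs} \<in> E"

definition tree :: "'a set \<Rightarrow> 'a set set \<Rightarrow> bool" where
  "tree V E \<equiv> graph V E \<and> V \<noteq> {} \<and> connected_graph V E \<and> \<not> (\<exists>xs. is_cycle V E xs)"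

text \<open>Path graph: there are a tree T (w.l.o.g. on natural-number vertices), a collection of
  paths of T (each path represented by its vertex set) and a bijection phi from V onto
  that collection such that distinct u, v are adjacent iff phi u and phi v intersect.\<close>
definition path_graph :: "'a set \<Rightarrow> 'a set set \<Rightarrow> bool" where
  "path_graph V E \<equiv> \<exists>(TV :: nat set) TE (\<phi> :: 'a \<Rightarrow> nat set).
     tree TV TE \<and> inj_on \<phi> V \<and>
     (\<forall>v\<in>V. \<exists>ps. is_path TV TE ps \<and> set ps = \<phi> v) \<and>
     (\<forall>u\<in>V. \<forall>v\<in>V. u \<noteq> v \<longrightarrow> ({u, v} \<in> E \<longleftrightarrow> \<phi> u \<inter> \<phi> v \<noteq> {}))"

text \<open>G^+: vertices Inl v (old) and Inr v (the new pendant v^+), edges E plus {v, v^+}.\<close>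
definition plus_V :: "'a set \<Rightarrow> ('a + 'a) set" where
  "plus_V V = Inl ` V \<union> Inr ` V"

definition plus_E :: "'a set \<Rightarrow> 'a set set \<Rightarrow> ('a + 'a) set set" where
  "plus_E V E = (\<lambda>e. Inl ` e) ` E \<union> {{Inl v, Inr v} | v. v \<in> V}"

end

theory Submission
  imports Defs
begin

lemma is_path_mono:
  "is_path V E xs \<Longrightarrow> V \<subseteq> V' \<Longrightarrow> E \<subseteq> E' \<Longrightarrow> is_path V' E' xs"
  unfolding is_path_def by blast

lemma is_path_snoc:
  assumes "is_path V E xs" "y \<in> V" "y \<notin> set xs" "{last xs, y} \<in> E"
  shows "is_path V E (xs @ [y])"
  unfolding is_path_def
proof (intro conjI allI impI)
  show "xs @ [y] \<noteq> []" by simp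
  show "distinct (xs @ [y])" using assms unfolding is_path_def by simp
  show "set (xs @ [y]) \<subseteq> V" using assms unfolding is_path_def by simp
  fix i assume i: "Suc i < length (xs @ [y])"
  show "{(xs @ [y]) ! i, (xs @ [y]) ! Suc i} \<in> E"
  proof (cases "Suc i < length xs")
    case True
    then show ?thesis using assms(1) unfolding is_path_def by (simp add: nth_append)
  next
    case False
    then have "i = length xs - 1" "xs \<noteq> []" using i assms(1) unfolding is_path_def by auto
    then show ?thesis using assms(4) False
      by (simp add: nth_append last_conv_nth)
  qed
qed

lemma is_path_rev:
  assumes "is_path V E xs" shows "is_path V E (rev xs)"
  unfolding is_path_def
proof (intro conjI allI impI)
  show "rev xs \<noteq> []" "distinct (rev xs)" "set (rev xs) \<subseteq> V"
    using assms unfolding is_path_def by auto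
  fix i assume i: "Suc i < length (rev xs)"
  define j where "j = length xs - Suc (Suc i)"
  have j: "Suc j < length xs" "length xs - Suc i = Suc j" using i unfolding j_def by auto
  have "{xs ! j, xs ! Suc j} \<in> E" using assms j unfolding is_path_def by auto
  then show "{rev xs ! i, rev xs ! Suc i} \<in> E" using i j
    by (simp add: rev_nth j_def insert_commute)
qed

lemma tree_add_leaf:
  assumes T: "tree TV TE" and a: "a \<in> TV" and l: "l \<notin> TV"
  shows "tree (insert l TV) (insert {a, l} TE)"
proof -
  have al: "a \<noteq> l" using a l by auto
  have g: "graph TV TE" and ne: "TV \<noteq> {}" and con: "connected_graph TV TE"
    and nc: "\<not> (\<exists>xs. is_cycle TV TE xs)" using T unfolding tree_def by auto
  have g': "graph (insert l TV) (insert {a, l} TE)"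
    using g a al unfolding graph_def by auto
  have lTE: "\<And>e. e \<in> TE \<Longrightarrow> l \<notin> e" using g l unfolding graph_def by auto
  have nb: "p = a" if "{p, l} \<in> insert {a, l} TE" for p
  proof -
    have "{p, l} = {a, l}" using that lTE by auto
    then show ?thesis using al by (auto simp: doubleton_eq_iff)
  qed
  have toL: "\<exists>xs. is_path (insert l TV) (insert {a, l} TE) xs \<and> hd xs = x \<and> last xs = l"
    if x: "x \<in> TV" for x
  proof -
    obtain xs where xs: "is_path TV TE xs" "hd xs = x" "last xs = a"
      using con x a unfolding connected_graph_def by blast
    have p: "is_path (insert l TV) (insert {a, l} TE) xs"
      using xs(1) by (rule is_path_mono) auto
    have "l \<notin> set xs" using xs(1) l unfolding is_path_def by auto
    then have "is_path (insert l TV) (insert {a, l} TE) (xs @ [l])"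
      using is_path_snoc[OF p] xs by auto
    moreover have "xs \<noteq> []" using xs(1) unfolding is_path_def by auto
    ultimately show ?thesis using xs by (intro exI[of _ "xs @ [l]"]) auto
  qed
  have con': "connected_graph (insert l TV) (insert {a, l} TE)"
    unfolding connected_graph_def
  proof (intro ballI)
    fix x y assume x: "x \<in> insert l TV" and y: "y \<in> insert l TV"
    show "\<exists>xs. is_path (insert l TV) (insert {a, l} TE) xs \<and> hd xs = x \<and> last xs = y"
    proof (cases "x = l")
      case True
      show ?thesis
      proof (cases "y = l")
        case True
        then show ?thesis using \<open>x = l\<close>
          by (intro exI[of _ "[l]"]) (auto simp: is_path_def)
      next
        case False
        then have "y \<in> TV" using y by auto
        then obtain xs where xs: "is_path (insert l TV) (insert {a, l} TE) xs" "hd xs = y" "last xs = l"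
          using toL by blast
        have "xs \<noteq> []" using xs(1) unfolding is_path_def by auto
        then show ?thesis using xs True is_path_rev[OF xs(1)]
          by (intro exI[of _ "rev xs"]) (auto simp: hd_rev last_rev)
      qed
    next
      case False
      then have xT: "x \<in> TV" using x by auto
      show ?thesis
      proof (cases "y = l")
        case True then show ?thesis using toL xT by blast
      next
        case False
        then have "y \<in> TV" using y by auto
        then obtain xs where xs: "is_path TV TE xs" "hd xs = x" "last xs = y"
          using con xT unfolding connected_graph_def by blast
        have "is_path (insert l TV) (insert {a, l} TE) xs"
          using xs(1) by (rule is_path_mono) auto
        then show ?thesis using xs by blast
      qed
    qed
  qed
  have nc': "\<not> (\<exists>xs. is_cycle (insert l TV) (insert {a, l} TE) xs)"
  proof
    assume "\<exists>xs. is_cycle (insert l TV) (insert {a, l} TE) xs"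
    then obtain xs where c: "is_cycle (insert l TV) (insert {a, l} TE) xs" by blast
    have len: "3 \<le> length xs" and p: "is_path (insert l TV) (insert {a, l} TE) xs"
      and cl: "{last xs, hd xs} \<in> insert {a, l} TE" using c unfolding is_cycle_def by auto
    have dist: "distinct xs" and edges: "\<And>i. Suc i < length xs \<Longrightarrow> {xs ! i, xs ! Suc i} \<in> insert {a, l} TE"
      and sub: "set xs \<subseteq> insert l TV"
      using p unfolding is_path_def by auto
    have ne: "xs \<noteq> []" using len by auto
    have lastn: "last xs = xs ! (length xs - 1)" and hdn: "hd xs = xs ! 0"
      using ne by (auto simp: last_conv_nth hd_conv_nth)
    show False
    proof (cases "l \<in> set xs")
      case False
      have "is_cycle TV TE xs"
        unfolding is_cycle_def is_path_def
      proof (intro conjI allI impI)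
        show "3 \<le> length xs" "xs \<noteq> []" "distinct xs" using len ne dist by auto
        show "set xs \<subseteq> TV" using sub False by auto
        fix i assume i: "Suc i < length xs"
        have "xs ! i \<in> set xs" "xs ! Suc i \<in> set xs" using i by auto
        then have "l \<notin> {xs ! i, xs ! Suc i}" using False by auto
        then have "{xs ! i, xs ! Suc i} \<noteq> {a, l}" by auto
        then show "{xs ! i, xs ! Suc i} \<in> TE" using edges[OF i] by auto
      next
        have "last xs \<in> set xs" "hd xs \<in> set xs" using ne by auto
        then have "l \<notin> {last xs, hd xs}" using False by auto
        then have "{last xs, hd xs} \<noteq> {a, l}" by auto
        then show "{last xs, hd xs} \<in> TE" using cl by auto
      qed
      then show False using nc by blast
    next
      case True
      then obtain k where k: "k < length xs" "xs ! k = l" by (auto simp: in_set_conv_nth)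
      let ?n = "length xs"
      have ix: "\<And>i j. i < ?n \<Longrightarrow> j < ?n \<Longrightarrow> xs ! i = xs ! j \<Longrightarrow> i = j"
        using dist by (simp add: nth_eq_iff_index_eq)
      show False
      proof (cases "k = 0")
        case True
        have e1: "{xs ! 1, l} \<in> insert {a, l} TE" using edges[of 0] len k True by (auto simp: insert_commute)
        have e2: "{xs ! (?n - 1), l} \<in> insert {a, l} TE" using cl k True lastn hdn by simp
        have q: "xs ! 1 = xs ! (?n - 1)" using nb[OF e1] nb[OF e2] by simp
        have q1: "1 < ?n" and q2: "?n - 1 < ?n" using len by auto
        have "1 = ?n - 1" by (rule ix[OF q1 q2 q])
        then show False using len by simp
      next
        case False
        have e1: "{xs ! (k - 1), l} \<in> insert {a, l} TE" using edges[of "k - 1"] k False by auto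
        show False
        proof (cases "k = ?n - 1")
          case True
          have e2: "{xs ! 0, l} \<in> insert {a, l} TE" using cl k True lastn hdn by (simp add: insert_commute)
          have q: "xs ! (k - 1) = xs ! 0" using nb[OF e1] nb[OF e2] by simp
          have q1: "k - 1 < ?n" and q2: "0 < ?n" and q3: "k - 1 \<noteq> 0" using len True by auto
          show False using ix[OF q1 q2 q] q3 by simp
        next
          case False
          have e2: "{xs ! Suc k, l} \<in> insert {a, l} TE" using edges[of k] k False
            by (auto simp: insert_commute)
          have q: "xs ! (k - 1) = xs ! Suc k" using nb[OF e1] nb[OF e2] by simp
          have q1: "k - 1 < ?n" and q2: "Suc k < ?n" using k False by auto
          show False using ix[OF q1 q2 q] by simp
        qed
      qed
    qed
  qed
  show ?thesis unfolding tree_def using g' con' nc' by auto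
qed

lemma plusE_LL:
  fixes u v :: 'a and V :: "'a set" and E :: "'a set set"
  shows "{Inl u, Inl v} \<in> plus_E V E \<longleftrightarrow> {u, v} \<in> E"
proof
  assume a: "{Inl u, Inl v} \<in> plus_E V E"
  show "{u, v} \<in> E"
  proof (cases "{Inl u, Inl v} \<in> ((\<lambda>e. Inl ` e) ` E :: ('a + 'a) set set)")
    case True
    obtain e where e: "{Inl u, Inl v} = (Inl ` e :: ('a + 'a) set)" "e \<in> E"
      using True by (rule imageE)
    have "{u, v} = e"
    proof (rule set_eqI)
      fix x
      have "x \<in> e \<longleftrightarrow> (Inl x :: 'a + 'a) \<in> Inl ` e" by auto
      also have "\<dots> \<longleftrightarrow> (Inl x :: 'a + 'a) \<in> {Inl u, Inl v}" by (simp only: e(1))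
      finally show "x \<in> {u, v} \<longleftrightarrow> x \<in> e" by auto
    qed
    then show ?thesis using e(2) by simp
  next
    case False
    from a have "{Inl u, Inl v} \<in> ((\<lambda>e. Inl ` e) ` E :: ('a + 'a) set set) \<or> {Inl u, Inl v} \<in> {{Inl w, Inr w} |w. w \<in> V}"
      unfolding plus_E_def Un_iff .
    then have "{Inl u, Inl v} \<in> {{Inl w, Inr w} |w. w \<in> V}"
      using False by (elim disjE) (contradiction, assumption)
    then obtain w where w: "{Inl u, Inl v} = {Inl w, Inr w :: 'a + 'a}" "w \<in> V"
      unfolding mem_Collect_eq by (elim exE conjE)
    have "Inr w \<in> {Inl w, Inr w :: 'a + 'a}" by simp
    then have "Inr w \<in> {Inl u, Inl v}" by (simp only: w(1)[symmetric])
    then show ?thesis by simp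
  qed
next
  assume "{u, v} \<in> E"
  then have "(Inl :: 'a \<Rightarrow> 'a + 'a) ` {u, v} \<in> (\<lambda>e. Inl ` e) ` E" by (rule imageI)
  then show "{Inl u, Inl v} \<in> plus_E V E" unfolding plus_E_def by simp
qed

lemma plusE_LR:
  fixes u v :: 'a and V :: "'a set" and E :: "'a set set"
  shows "{Inl u, Inr v} \<in> plus_E V E \<longleftrightarrow> (u = v \<and> v \<in> V)"
proof -
  have 1: "{Inl u, Inr v} \<notin> (\<lambda>e. Inl ` e) ` E" by auto
  have 2: "({Inl w, Inr w} = {Inl u, Inr v}) = (w = u \<and> w = v)" for w :: 'a
    by (simp add: doubleton_eq_iff)
  have 3: "{Inl u, Inr v} \<in> {{Inl w, Inr w} |w. w \<in> V} \<longleftrightarrow> (u = v \<and> v \<in> V)"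
  proof
    assume "{Inl u, Inr v} \<in> {{Inl w, Inr w} |w. w \<in> V}"
    then obtain w where "{Inl u, Inr v} = {Inl w, Inr w :: 'a + 'a}" "w \<in> V"
      unfolding mem_Collect_eq by (elim exE conjE)
    then show "u = v \<and> v \<in> V" using 2[of w] by metis
  qed blast
  show ?thesis unfolding plus_E_def using 1 3 by (simp only: Un_iff) blast
qed

lemma plusE_RR:
  fixes u v :: 'a and V :: "'a set" and E :: "'a set set"
  shows "{Inr u, Inr v} \<notin> plus_E V E"
proof -
  have 1: "{Inr u, Inr v} \<notin> (\<lambda>e. Inl ` e) ` E" by auto
  have 2: "{Inl w, Inr w} \<noteq> {Inr u, Inr v}" for w :: 'a
    by (simp add: doubleton_eq_iff)
  show ?thesis unfolding plus_E_def using 1 2 by auto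
qed

lemma plus_V_iff: "Inl v \<in> plus_V V \<longleftrightarrow> v \<in> V" "Inr v \<in> plus_V V \<longleftrightarrow> v \<in> V"
  unfolding plus_V_def by auto

lemma back_dir:
  fixes V :: "'a set" and E :: "'a set set"
  assumes "path_graph (plus_V V) (plus_E V E)"
  shows "path_graph V E"
proof -
  obtain TV TE and \<phi> :: "'a + 'a \<Rightarrow> nat set" where
    t: "tree TV TE" and inj: "inj_on \<phi> (plus_V V)"
    and p: "\<forall>v\<in>plus_V V. \<exists>ps. is_path TV TE ps \<and> set ps = \<phi> v"
    and a: "\<forall>u\<in>plus_V V. \<forall>v\<in>plus_V V. u \<noteq> v \<longrightarrow> ({u, v} \<in> plus_E V E \<longleftrightarrow> \<phi> u \<inter> \<phi> v \<noteq> {})"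
    using assms unfolding path_graph_def by (elim exE conjE)
  have i: "inj_on (\<lambda>v. \<phi> (Inl v)) V"
  proof (rule inj_onI)
    fix x y assume "x \<in> V" "y \<in> V" "\<phi> (Inl x) = \<phi> (Inl y)"
    then have "Inl x = (Inl y :: 'a + 'a)"
      using inj_onD[OF inj] plus_V_iff(1) by metis
    then show "x = y" by simp
  qed
  have q: "\<forall>v\<in>V. \<exists>ps. is_path TV TE ps \<and> set ps = \<phi> (Inl v)"
  proof
    fix v assume "v \<in> V"
    then have h: "Inl v \<in> plus_V V" by (simp add: plus_V_iff)
    show "\<exists>ps. is_path TV TE ps \<and> set ps = \<phi> (Inl v)" by (rule bspec[OF p h])
  qed
  have r: "\<forall>u\<in>V. \<forall>v\<in>V. u \<noteq> v \<longrightarrow> ({u, v} \<in> E \<longleftrightarrow> \<phi> (Inl u) \<inter> \<phi> (Inl v) \<noteq> {})"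
  proof (intro ballI impI)
    fix u v assume u: "u \<in> V" and v: "v \<in> V" and uv: "u \<noteq> v"
    have u': "Inl u \<in> plus_V V" and v': "Inl v \<in> plus_V V" using u v by (simp_all add: plus_V_iff)
    have uv': "Inl u \<noteq> (Inl v :: 'a + 'a)" using uv by simp
    have "{Inl u, Inl v} \<in> plus_E V E \<longleftrightarrow> \<phi> (Inl u) \<inter> \<phi> (Inl v) \<noteq> {}"
      using a u' v' uv' by blast
    then show "{u, v} \<in> E \<longleftrightarrow> \<phi> (Inl u) \<inter> \<phi> (Inl v) \<noteq> {}"
      unfolding plusE_LL .
  qed
  show ?thesis unfolding path_graph_def
    apply (rule exI[of _ TV])
    apply (rule exI[of _ TE])
    apply (rule exI[of _ "\<lambda>v. \<phi> (Inl v)"])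
    using t i q r by simp
qed

lemma fwd_dir:
  fixes V :: "'a set" and E :: "'a set set"
  assumes g: "graph V E" and pg: "path_graph V E"
  shows "path_graph (plus_V V) (plus_E V E)"
proof -
  obtain TV TE and \<phi> :: "'a \<Rightarrow> nat set" where
    t: "tree TV TE" and inj: "inj_on \<phi> V"
    and p: "\<forall>v\<in>V. \<exists>ps. is_path TV TE ps \<and> set ps = \<phi> v"
    and a: "\<forall>u\<in>V. \<forall>v\<in>V. u \<noteq> v \<longrightarrow> ({u, v} \<in> E \<longleftrightarrow> \<phi> u \<inter> \<phi> v \<noteq> {})"
    using pg unfolding path_graph_def by blast
  have finV: "finite V" using g unfolding graph_def by auto
  have finT: "finite TV" using t unfolding tree_def graph_def by auto
  define ps where "ps v = (SOME q. is_path TV TE q \<and> set q = \<phi> v)" for v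
  have ps: "is_path TV TE (ps v)" "set (ps v) = \<phi> v" if "v \<in> V" for v
    using someI_ex[OF p[rule_format, OF that]] unfolding ps_def by auto
  have phiT: "\<phi> v \<subseteq> TV" "\<phi> v \<noteq> {}" if "v \<in> V" for v
    using ps[OF that] unfolding is_path_def by auto
  define av where "av v = last (ps v)" for v
  have avT: "av v \<in> TV" if "v \<in> V" for v
    using ps[OF that] unfolding is_path_def av_def by auto
  obtain f :: "'a \<Rightarrow> nat" and n where f: "f ` V = {i. i < n}" "inj_on f V"
    using finite_imp_inj_to_nat_seg[OF finV] by blast
  define l where "l v = Suc (Max TV) + f v" for v
  have lT: "l v \<notin> TV" for v
  proof
    assume "l v \<in> TV"
    then have "l v \<le> Max TV" using finT by simp
    then show False unfolding l_def by simp
  qed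
  have linj: "inj_on l V" using f(2) unfolding inj_on_def l_def by auto
  have treeS: "tree (TV \<union> l ` S) (TE \<union> (\<lambda>v. {av v, l v}) ` S)" if "finite S" "S \<subseteq> V" for S
    using that
  proof (induction S rule: finite_subset_induct')
    case empty
    then show ?case using t by simp
  next
    case (insert x S)
    have "l x \<notin> l ` S"
    proof
      assume "l x \<in> l ` S"
      then obtain y where y: "y \<in> S" "l x = l y" by blast
      have "x = y" using inj_onD[OF linj y(2)] insert.hyps(2,3) y(1) by blast
      then show False using insert.hyps(4) y(1) by simp
    qed
    then have lx: "l x \<notin> TV \<union> l ` S" using lT[of x] by blast
    have ax: "av x \<in> TV \<union> l ` S" using avT[OF insert.hyps(2)] by blast
    have tt: "tree (insert (l x) (TV \<union> l ` S)) (insert {av x, l x} (TE \<union> (\<lambda>v. {av v, l v}) ` S))"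
      by (rule tree_add_leaf[OF insert.IH ax lx])
    have e1: "insert (l x) (TV \<union> l ` S) = TV \<union> l ` insert x S" by auto
    have e2: "insert {av x, l x} (TE \<union> (\<lambda>v. {av v, l v}) ` S) = TE \<union> (\<lambda>v. {av v, l v}) ` insert x S" by auto
    show ?case using tt unfolding e1 e2 .
  qed
  define TV' where "TV' = TV \<union> l ` V"
  define TE' where "TE' = TE \<union> (\<lambda>v. {av v, l v}) ` V"
  have t': "tree TV' TE'" unfolding TV'_def TE'_def by (rule treeS[OF finV order_refl])
  define \<psi> :: "'a + 'a \<Rightarrow> nat set" where "\<psi> = case_sum (\<lambda>v. \<phi> v \<union> {l v}) (\<lambda>v. {l v})"
  have inj': "inj_on \<psi> (plus_V V)"
  proof (rule inj_onI)
    fix x y assume x: "x \<in> plus_V V" and y: "y \<in> plus_V V" and eq: "\<psi> x = \<psi> y"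
    show "x = y"
    proof (cases x)
      case (Inl u)
      then have u: "u \<in> V" using x unfolding plus_V_def by auto
      show ?thesis
      proof (cases y)
        case (Inl w)
        then have w: "w \<in> V" using y unfolding plus_V_def by auto
        have e: "\<phi> u \<union> {l u} = \<phi> w \<union> {l w}" using eq Inl \<open>x = Inl u\<close> unfolding \<psi>_def by simp
        then have "l u \<in> \<phi> w \<union> {l w}" by auto
        then have "l u = l w" using phiT[OF w] lT by blast
        then have "u = w" using linj u w unfolding inj_on_def by blast
        then show ?thesis using Inl \<open>x = Inl u\<close> by simp
      next
        case (Inr w)
        have e: "\<phi> u \<union> {l u} = {l w}" using eq Inr \<open>x = Inl u\<close> unfolding \<psi>_def by simp
        obtain z where "z \<in> \<phi> u" using phiT[OF u] by blast
        then have "z \<in> TV" "z = l w" using e phiT[OF u] by auto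
        then show ?thesis using lT by blast
      qed
    next
      case (Inr u)
      then have u: "u \<in> V" using x unfolding plus_V_def by auto
      show ?thesis
      proof (cases y)
        case (Inr w)
        then have w: "w \<in> V" using y unfolding plus_V_def by auto
        have "l u = l w" using eq Inr \<open>x = Inr u\<close> unfolding \<psi>_def by simp
        then have "u = w" using linj u w unfolding inj_on_def by blast
        then show ?thesis using Inr \<open>x = Inr u\<close> by simp
      next
        case (Inl w)
        then have w: "w \<in> V" using y unfolding plus_V_def by auto
        have e: "\<phi> w \<union> {l w} = {l u}" using eq Inl \<open>x = Inr u\<close> unfolding \<psi>_def by simp
        obtain z where "z \<in> \<phi> w" using phiT[OF w] by blast
        then have "z \<in> TV" "z = l u" using e phiT[OF w] by auto
        then show ?thesis using lT by blast
      qed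
    qed
  qed
  have paths': "\<exists>q. is_path TV' TE' q \<and> set q = \<psi> x" if x: "x \<in> plus_V V" for x
  proof (cases x)
    case (Inl v)
    then have v: "v \<in> V" using x unfolding plus_V_def by auto
    have "is_path TV' TE' (ps v)" using ps(1)[OF v] by (rule is_path_mono) (auto simp: TV'_def TE'_def)
    moreover have "l v \<in> TV'" using v unfolding TV'_def by auto
    moreover have "l v \<notin> set (ps v)" using ps[OF v] phiT[OF v] lT by auto
    moreover have "{last (ps v), l v} \<in> TE'" using v unfolding TE'_def av_def by auto
    ultimately have "is_path TV' TE' (ps v @ [l v])" by (rule is_path_snoc)
    moreover have "set (ps v @ [l v]) = \<psi> x" using Inl ps(2)[OF v] unfolding \<psi>_def by auto
    ultimately show ?thesis by blast
  next
    case (Inr v)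
    then have v: "v \<in> V" using x unfolding plus_V_def by auto
    have "is_path TV' TE' [l v]" using v unfolding is_path_def TV'_def by auto
    moreover have "set [l v] = \<psi> x" using Inr unfolding \<psi>_def by auto
    ultimately show ?thesis by blast
  qed
  have lneq: "l u \<noteq> l w" if "u \<in> V" "w \<in> V" "u \<noteq> w" for u w
    using inj_onD[OF linj _ that(1,2)] that(3) by blast
  have lnotin: "l w \<notin> \<phi> v" if "v \<in> V" for v w
    using phiT(1)[OF that] lT[of w] by blast
  have adj: "{x, y} \<in> plus_E V E \<longleftrightarrow> \<psi> x \<inter> \<psi> y \<noteq> {}"
    if x: "x \<in> plus_V V" and y: "y \<in> plus_V V" and xy: "x \<noteq> y" for x y
  proof (cases x)
    case (Inl u)
    then have u: "u \<in> V" using x unfolding plus_V_def by auto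
    show ?thesis
    proof (cases y)
      case (Inl w)
      then have w: "w \<in> V" using y unfolding plus_V_def by auto
      have uw: "u \<noteq> w" using xy Inl \<open>x = Inl u\<close> by auto
      have i1: "\<psi> x \<inter> \<psi> y = (\<phi> u \<union> {l u}) \<inter> (\<phi> w \<union> {l w})"
        using Inl \<open>x = Inl u\<close> unfolding \<psi>_def by simp
      have i2: "(\<phi> u \<union> {l u}) \<inter> (\<phi> w \<union> {l w}) = \<phi> u \<inter> \<phi> w"
        using lneq[OF u w uw] lnotin[OF u, of w] lnotin[OF w, of u] by auto
      have "{x, y} \<in> plus_E V E \<longleftrightarrow> {u, w} \<in> E"
        using Inl \<open>x = Inl u\<close> plusE_LL[of u w V E] by simp
      also have "\<dots> \<longleftrightarrow> \<phi> u \<inter> \<phi> w \<noteq> {}" using a u w uw by blast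
      finally show ?thesis unfolding i1 i2 .
    next
      case (Inr w)
      then have w: "w \<in> V" using y unfolding plus_V_def by auto
      have i1: "\<psi> x \<inter> \<psi> y = (\<phi> u \<union> {l u}) \<inter> {l w}"
        using Inr \<open>x = Inl u\<close> unfolding \<psi>_def by simp
      have i2: "((\<phi> u \<union> {l u}) \<inter> {l w} \<noteq> {}) \<longleftrightarrow> u = w"
      proof
        assume "(\<phi> u \<union> {l u}) \<inter> {l w} \<noteq> {}"
        then have "l w \<in> \<phi> u \<union> {l u}" by auto
        then have "l w = l u" using lnotin[OF u, of w] by blast
        then show "u = w" using lneq[OF u w] by auto
      qed auto
      have "{x, y} \<in> plus_E V E \<longleftrightarrow> u = w"
        using Inr \<open>x = Inl u\<close> plusE_LR[of u w V E] w by simp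
      then show ?thesis unfolding i1 i2 .
    qed
  next
    case (Inr u)
    then have u: "u \<in> V" using x unfolding plus_V_def by auto
    show ?thesis
    proof (cases y)
      case (Inr w)
      then have w: "w \<in> V" using y unfolding plus_V_def by auto
      have uw: "u \<noteq> w" using xy Inr \<open>x = Inr u\<close> by auto
      have "\<psi> x \<inter> \<psi> y = {}"
        using Inr \<open>x = Inr u\<close> lneq[OF u w uw] unfolding \<psi>_def by simp
      moreover have "{x, y} \<notin> plus_E V E"
        using Inr \<open>x = Inr u\<close> plusE_RR[of u w V E] by simp
      ultimately show ?thesis by simp
    next
      case (Inl w)
      then have w: "w \<in> V" using y unfolding plus_V_def by auto
      have i1: "\<psi> x \<inter> \<psi> y = {l u} \<inter> (\<phi> w \<union> {l w})"
        using Inl \<open>x = Inr u\<close> unfolding \<psi>_def by simp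
      have i2: "({l u} \<inter> (\<phi> w \<union> {l w}) \<noteq> {}) \<longleftrightarrow> w = u"
      proof
        assume "{l u} \<inter> (\<phi> w \<union> {l w}) \<noteq> {}"
        then have "l u \<in> \<phi> w \<union> {l w}" by auto
        then have "l u = l w" using lnotin[OF w, of u] by blast
        then show "w = u" using lneq[OF u w] by auto
      qed auto
      have xy': "{x, y} = {Inl w, Inr u}" using Inl \<open>x = Inr u\<close> by auto
      have "{x, y} \<in> plus_E V E \<longleftrightarrow> w = u"
        unfolding xy' using plusE_LR[of w u V E] u by simp
      then show ?thesis unfolding i1 i2 .
    qed
  qed
  show ?thesis unfolding path_graph_def
    apply (rule exI[of _ TV'])
    apply (rule exI[of _ TE'])
    apply (rule exI[of _ \<psi>])
    using t' inj' paths' adj by simp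
qed

theorem lemma4p2:
  fixes V :: "'a set" and E :: "'a set set"
  assumes "graph V E"
  shows "path_graph V E \<longleftrightarrow> path_graph (plus_V V) (plus_E V E)"
proof
  assume "path_graph V E"
  then show "path_graph (plus_V V) (plus_E V E)" by (rule fwd_dir[OF assms])
next
  assume "path_graph (plus_V V) (plus_E V E)"
  then show "path_graph V E" by (rule back_dir)
qed

end
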